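(* Let $\lambda=1$ and let $T_1,T_2,T_3$ be $0$-currents in $\mathbb{R}^d$, each consisting of a single point mass of multiplicity $+1$ (so each has mass $1$ and positive orientation), located at three points whose pairwise distances all exceed $4$. Then the unique minimizer over integral $0$-currents $T$ of $\sum_{i=1}^3\mathbb{F}_1(T-T_i)$ is the zero (empty) $0$-current.
   Context: Integral $0$-currents are finite integer combinations of signed point masses. For a $0$-current $H$, $\mathbb{F}_\lambda(H)=\inf_{S}\operatorname{M}(H-\partial S)+\lambda\operatorname{M}(S)$, the infimum over $1$-currents $S$ in $\mathbb{R}^d$, where $\operatorname{M}$ denotes mass. The minimizer of $T\mapsto\sum_i\mathbb{F}_\lambda(T-T_i)$ over integral currents is called the median of the $T_i$. *)

theory Defs
  imports "HOL-Analysis.Analysis"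
begin

text \<open>Currents in a Euclidean space 'a (= R^d) in the sense of de Rham:
 0-currents act on smooth compactly supported real functions (0-forms),
 1-currents act on smooth compactly supported vector fields (1-forms, identified
 with vector fields via the inner product).\<close>

fun Ck :: "nat \<Rightarrow> ('a::euclidean_space \<Rightarrow> real) set" where
  "Ck 0 = {f. continuous_on UNIV f}"
| "Ck (Suc k) = {f. (\<forall>x. f differentiable (at x)) \<and> continuous_on UNIV f \<and>
      (\<forall>i\<in>Basis. (\<lambda>x. frechet_derivative f (at x) i) \<in> Ck k)}"

definition smooth_fun :: "('a::euclidean_space \<Rightarrow> real) \<Rightarrow> bool" where
  "smooth_fun f \<longleftrightarrow> (\<forall>k. f \<in> Ck k)"

definition test0 :: "('a::euclidean_space \<Rightarrow> real) set" where
  "test0 = {f. smooth_fun f \<and> compact (closure {x. f x \<noteq> 0})}"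

definition test1 :: "('a::euclidean_space \<Rightarrow> 'a) set" where
  "test1 = {w. (\<forall>i\<in>Basis. smooth_fun (\<lambda>x. w x \<bullet> i)) \<and> compact (closure {x. w x \<noteq> 0})}"

definition current1 :: "(('a::euclidean_space \<Rightarrow> 'a) \<Rightarrow> real) \<Rightarrow> bool" where
  "current1 S \<longleftrightarrow> (\<forall>w\<in>test1. \<forall>v\<in>test1. \<forall>a b.
      S (\<lambda>x. a *\<^sub>R w x + b *\<^sub>R v x) = a * S w + b * S v)"

definition grad :: "('a::euclidean_space \<Rightarrow> real) \<Rightarrow> 'a \<Rightarrow> 'a" where
  "grad f = (\<lambda>x. \<Sum>i\<in>Basis. frechet_derivative f (at x) i *\<^sub>R i)"

definition bdry :: "(('a::euclidean_space \<Rightarrow> 'a) \<Rightarrow> real) \<Rightarrow> ('a \<Rightarrow> real) \<Rightarrow> real" where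
  "bdry S = (\<lambda>f. S (grad f))"

definition mass0 :: "(('a::euclidean_space \<Rightarrow> real) \<Rightarrow> real) \<Rightarrow> ereal" where
  "mass0 H = (SUP f\<in>{f\<in>test0. \<forall>x. \<bar>f x\<bar> \<le> 1}. ereal (H f))"

definition mass1 :: "(('a::euclidean_space \<Rightarrow> 'a) \<Rightarrow> real) \<Rightarrow> ereal" where
  "mass1 S = (SUP w\<in>{w\<in>test1. \<forall>x. norm (w x) \<le> 1}. ereal (S w))"

definition flat :: "real \<Rightarrow> (('a::euclidean_space \<Rightarrow> real) \<Rightarrow> real) \<Rightarrow> ereal" where
  "flat lam H = (INF S\<in>{S. current1 S}.
      mass0 (\<lambda>f. H f - bdry S f) + ereal lam * mass1 S)"

text \<open>Integral 0-currents: finitely supported integer multiplicities on points.\<close>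
definition integral0 :: "('a \<Rightarrow> int) \<Rightarrow> bool" where
  "integral0 T \<longleftrightarrow> finite {x. T x \<noteq> 0}"

definition cur0 :: "('a \<Rightarrow> int) \<Rightarrow> ('a \<Rightarrow> real) \<Rightarrow> real" where
  "cur0 T = (\<lambda>f. \<Sum>x\<in>{x. T x \<noteq> 0}. of_int (T x) * f x)"

definition pt :: "'a \<Rightarrow> 'a \<Rightarrow> int" where
  "pt p = (\<lambda>x. if x = p then 1 else 0)"

definition median_obj :: "real \<Rightarrow> ('a::euclidean_space \<Rightarrow> int) list \<Rightarrow> ('a \<Rightarrow> int) \<Rightarrow> ereal" where
  "median_obj lam Ts T = (\<Sum>Ti\<leftarrow>Ts. flat lam (cur0 (\<lambda>x. T x - Ti x)))"

end

theory Submission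
  imports Defs "HOL-Computational_Algebra.Polynomial"
begin

definition E :: "real poly \<Rightarrow> real \<Rightarrow> real" where
  "E Q t = (if t > 0 then poly Q (1/t) * exp (-1/t) else 0)"

definition Rp :: "real poly \<Rightarrow> real poly" where
  "Rp Q = [:0,0,1:] * (Q - pderiv Q)"

lemma poly_exp_lim: "((\<lambda>u. poly Q u * exp (-u)) \<longlongrightarrow> (0::real)) at_top"
proof -
  have "((\<lambda>u. \<Sum>i\<le>degree Q. coeff Q i * (u ^ i / exp u)) \<longlongrightarrow> (\<Sum>i\<le>degree Q. coeff Q i * 0)) at_top"
    by (intro tendsto_sum tendsto_mult tendsto_const tendsto_power_div_exp_0)
  moreover have "\<And>u. poly Q u * exp (-u) = (\<Sum>i\<le>degree Q. coeff Q i * (u ^ i / exp u))"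
    by (simp add: poly_altdef sum_distrib_right sum_divide_distrib[symmetric] exp_minus field_simps)
  ultimately show ?thesis by simp
qed

lemma E_deriv_pos:
  assumes "t > 0"
  shows "(E Q has_real_derivative E (Rp Q) t) (at t)"
proof -
  have "((\<lambda>t. poly Q (1/t) * exp (-1/t)) has_real_derivative
      (poly (pderiv Q) (1/t) * (- 1 / t^2) * exp (-1/t) + poly Q (1/t) * (exp (-1/t) * (1/t^2)))) (at t)"
    using assms
    by (auto intro!: derivative_eq_intros DERIV_chain2[where f="poly Q"] poly_DERIV simp: power2_eq_square field_simps)
  moreover have "poly (pderiv Q) (1/t) * (- 1 / t^2) * exp (-1/t) + poly Q (1/t) * (exp (-1/t) * (1/t^2))
     = E (Rp Q) t"
    using assms by (simp add: E_def Rp_def algebra_simps power2_eq_square)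
  ultimately have "((\<lambda>t. poly Q (1/t) * exp (-1/t)) has_real_derivative E (Rp Q) t) (at t)" by simp
  then show ?thesis
    by (rule has_field_derivative_transform_within_open[where S="{0<..}"]) (use assms in \<open>auto simp: E_def\<close>)
qed

lemma E_deriv_neg:
  assumes "t < 0"
  shows "(E Q has_real_derivative E (Rp Q) t) (at t)"
proof -
  have "((\<lambda>t. 0) has_real_derivative 0) (at t)" by simp
  then have "(E Q has_real_derivative 0) (at t)"
    by (rule has_field_derivative_transform_within_open[where S="{..<0}"]) (use assms in \<open>auto simp: E_def\<close>)
  then show ?thesis using assms by (simp add: E_def)
qed

lemma E_deriv_zero:
  "(E Q has_real_derivative E (Rp Q) 0) (at 0)"
proof -
  have E0: "E (Rp Q) 0 = 0" by (simp add: E_def)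
  have R: "((\<lambda>y. (E Q y - E Q 0) / (y - 0)) \<longlongrightarrow> 0) (at_right 0)"
  proof -
    have "((\<lambda>u. poly (pCons 0 Q) u * exp (-u)) \<longlongrightarrow> (0::real)) at_top" by (rule poly_exp_lim)
    then have "((\<lambda>y. poly (pCons 0 Q) (inverse y) * exp (- inverse y)) \<longlongrightarrow> (0::real)) (at_right 0)"
      by (rule filterlim_compose[OF _ filterlim_inverse_at_top_right])
    then show ?thesis
      apply (rule Lim_transform_eventually)
      apply (simp add: eventually_at_right_less E_def)
      by (auto simp: eventually_at_right_less E_def field_simps intro!: eventually_mono[OF eventually_at_right_less])
  qed
  have L: "((\<lambda>y. (E Q y - E Q 0) / (y - 0)) \<longlongrightarrow> 0) (at_left 0)"
  proof -
    have "eventually (\<lambda>y. 0 = (E Q y - E Q 0) / (y - 0)) (at_left (0::real))"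
      by (rule eventually_mono[OF eventually_at_left_real[where a=0 and b="-1", OF neg_less_0_iff_less[THEN iffD2, OF zero_less_one]]]) (auto simp: E_def)
    then show ?thesis by (rule Lim_transform_eventually[OF tendsto_const])
  qed
  show ?thesis unfolding has_field_derivative_iff E0
    using L R filterlim_at_split by blast
qed

lemma E_deriv: "(E Q has_real_derivative E (Rp Q) t) (at t)"
  using E_deriv_pos E_deriv_neg E_deriv_zero by (cases "t > 0"; cases "t < 0") auto

abbreviation pd :: "('a::euclidean_space \<Rightarrow> real) \<Rightarrow> 'a \<Rightarrow> 'a \<Rightarrow> real" where
  "pd f i \<equiv> (\<lambda>x. frechet_derivative f (at x) i)"

lemma Ck_Suc_iff: "f \<in> Ck (Suc k) \<longleftrightarrow> (\<forall>x. f differentiable (at x)) \<and> continuous_on UNIV f \<and> (\<forall>i\<in>Basis. pd f i \<in> Ck k)"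
  by simp

lemma Ck_cont: "f \<in> Ck k \<Longrightarrow> continuous_on UNIV f"
  by (cases k) auto

lemma Ck_mono: "f \<in> Ck (Suc k) \<Longrightarrow> f \<in> Ck k"
proof (induction k arbitrary: f)
  case 0 then show ?case by simp
next
  case (Suc k) then show ?case by (simp del: Ck.simps(1))
qed

lemma Ck_mono_le: "f \<in> Ck k \<Longrightarrow> m \<le> k \<Longrightarrow> f \<in> Ck m"
  by (induction k) (auto dest: Ck_mono simp: le_Suc_eq simp del: Ck.simps)

lemma diff_cont: "(\<forall>x. f differentiable (at x)) \<Longrightarrow> continuous_on UNIV f"
  by (simp add: differentiable_imp_continuous_within continuous_at_imp_continuous_on)

lemma pd_eq: "(f has_derivative f') (at x) \<Longrightarrow> frechet_derivative f (at x) i = f' i"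
  by (metis frechet_derivative_at)

lemma Ck_const: "(\<lambda>x::'a::euclidean_space. c::real) \<in> Ck k"
proof (induction k arbitrary: c)
  case 0 then show ?case by simp
next
  case (Suc k)
  have "pd (\<lambda>x::'a. c) i = (\<lambda>x. 0)" for i
    by (rule ext, rule pd_eq) (rule has_derivative_const)
  then show ?case using Suc by (simp add: diff_cont)
qed

lemma Ck_add: "f \<in> Ck k \<Longrightarrow> g \<in> Ck k \<Longrightarrow> (\<lambda>x. f x + g x) \<in> Ck k"
proof (induction k arbitrary: f g)
  case 0 then show ?case by (auto intro: continuous_on_add)
next
  case (Suc k)
  have d: "\<forall>x. f differentiable (at x)" "\<forall>x. g differentiable (at x)" using Suc by auto
  have "pd (\<lambda>x. f x + g x) i = (\<lambda>x. pd f i x + pd g i x)" for i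
    by (rule ext, rule pd_eq) (use d in \<open>auto intro!: has_derivative_add simp: frechet_derivative_works\<close>)
  moreover have "\<forall>x. (\<lambda>x. f x + g x) differentiable (at x)" using d by auto
  ultimately show ?case using Suc by (auto simp: diff_cont)
qed

lemma Ck_mult: "f \<in> Ck k \<Longrightarrow> g \<in> Ck k \<Longrightarrow> (\<lambda>x. f x * g x) \<in> Ck k"
proof (induction k arbitrary: f g)
  case 0 then show ?case by (auto intro: continuous_on_mult)
next
  case (Suc k)
  have d: "\<forall>x. f differentiable (at x)" "\<forall>x. g differentiable (at x)" using Suc by auto
  have "pd (\<lambda>x. f x * g x) i = (\<lambda>x. f x * pd g i x + pd f i x * g x)" for i
    by (rule ext, rule pd_eq) (use d in \<open>auto intro!: has_derivative_mult simp: frechet_derivative_works\<close>)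
  moreover have "\<forall>x. (\<lambda>x. f x * g x) differentiable (at x)" using d by auto
  moreover have "(\<lambda>x. f x * pd g i x + pd f i x * g x) \<in> Ck k" if "i \<in> Basis" for i
  proof -
    have fk: "f \<in> Ck k" using Suc.prems(1) by (rule Ck_mono)
    have gk: "g \<in> Ck k" using Suc.prems(2) by (rule Ck_mono)
    have "pd g i \<in> Ck k" "pd f i \<in> Ck k" using Suc.prems that by auto
    then show ?thesis by (intro Ck_add Suc.IH fk gk)
  qed
  ultimately show ?case by (auto simp: diff_cont)
qed

lemma Ck_cmult: "f \<in> Ck k \<Longrightarrow> (\<lambda>x. c * f x) \<in> Ck k"
  using Ck_mult[OF Ck_const] by blast

lemma Ck_inner: "(\<lambda>x::'a::euclidean_space. x \<bullet> v + c) \<in> Ck k"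
proof (induction k arbitrary: c)
  case 0 then show ?case by (auto intro!: continuous_intros)
next
  case (Suc k)
  have D: "((\<lambda>x::'a. x \<bullet> v + c) has_derivative (\<lambda>h. h \<bullet> v)) (at x)" for x
    by (auto intro!: derivative_eq_intros)
  then have "pd (\<lambda>x::'a. x \<bullet> v + c) i = (\<lambda>x. i \<bullet> v)" for i
    by (intro ext pd_eq) 
  then show ?case using D Ck_const by (auto simp: differentiable_def intro!: continuous_intros)
qed

lemma smooth_Suc: "smooth_fun f \<Longrightarrow> i \<in> Basis \<Longrightarrow> smooth_fun (pd f i)"
  unfolding smooth_fun_def
proof
  fix k assume "\<forall>k. f \<in> Ck k" "i \<in> Basis"
  then have "f \<in> Ck (Suc k)" by blast
  then show "pd f i \<in> Ck k" using \<open>i \<in> Basis\<close> by simp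
qed

lemma smooth_diff: assumes "smooth_fun f" shows "(f has_derivative frechet_derivative f (at x)) (at x)"
proof -
  have "f \<in> Ck (Suc 0)" using assms smooth_fun_def by blast
  then have "f differentiable (at x)" by simp
  then show ?thesis using frechet_derivative_works by blast
qed

lemma real_lin: "linear (L::real \<Rightarrow> real) \<Longrightarrow> L h = h * L 1"
  by (metis linear_scale mult.commute mult.right_neutral real_scaleR_def)

lemma Ck_comp:
  fixes q :: "'a::euclidean_space \<Rightarrow> real"
  assumes q: "smooth_fun q"
  shows "smooth_fun (G::real\<Rightarrow>real) \<Longrightarrow> (\<lambda>x. G (q x)) \<in> Ck k"
proof (induction k arbitrary: G)
  case 0
  have "G \<in> Ck 0" "q \<in> Ck 0" using 0 q smooth_fun_def by blast+
  then have "continuous_on UNIV G" "continuous_on UNIV q" by simp_all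
  then show ?case using continuous_on_compose2[of UNIV G UNIV q] by simp
next
  case (Suc k)
  have dG: "(G has_derivative frechet_derivative G (at y)) (at y)" for y by (rule smooth_diff[OF Suc.prems])
  have dq: "(q has_derivative frechet_derivative q (at x)) (at x)" for x by (rule smooth_diff[OF q])
  have DD: "((\<lambda>x. G (q x)) has_derivative (\<lambda>h. frechet_derivative G (at (q x)) (frechet_derivative q (at x) h))) (at x)" for x
    using diff_chain_at[OF dq dG] by (simp add: o_def)
  have lin: "linear (frechet_derivative G (at y))" for y using dG by (rule has_derivative_linear)
  have PE: "pd (\<lambda>x. G (q x)) i = (\<lambda>x. pd G 1 (q x) * pd q i x)" for i
  proof (rule ext)
    fix x
    have "frechet_derivative G (at (q x)) (pd q i x) = pd q i x * pd G 1 (q x)" by (rule real_lin[OF lin])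
    then show "pd (\<lambda>x. G (q x)) i x = pd G 1 (q x) * pd q i x" by (subst pd_eq[OF DD]) (simp add: mult.commute)
  qed
  have sG: "smooth_fun (pd G 1)" using smooth_Suc[OF Suc.prems] by simp
  have C: "(\<lambda>x. pd G 1 (q x) * pd q i x) \<in> Ck k" if "i \<in> Basis" for i
  proof -
    have a: "(\<lambda>x. pd G 1 (q x)) \<in> Ck k" by (rule Suc.IH[OF sG])
    have b: "pd q i \<in> Ck k" using smooth_Suc[OF q that] unfolding smooth_fun_def by blast
    show ?thesis by (rule Ck_mult[OF a b])
  qed
  have dd: "\<forall>x. (\<lambda>x. G (q x)) differentiable (at x)" using DD unfolding differentiable_def by blast
  show ?case unfolding Ck_Suc_iff PE using dd diff_cont[OF dd] C by blast
qed

lemma smooth_comp: "smooth_fun q \<Longrightarrow> smooth_fun (G::real\<Rightarrow>real) \<Longrightarrow> smooth_fun (\<lambda>x. G (q x))"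
  using Ck_comp by (auto simp: smooth_fun_def)

lemma smooth_const: "smooth_fun (\<lambda>x::'a::euclidean_space. c)"
  using Ck_const by (auto simp: smooth_fun_def)
lemma smooth_add: "smooth_fun f \<Longrightarrow> smooth_fun g \<Longrightarrow> smooth_fun (\<lambda>x. f x + g x)"
  unfolding smooth_fun_def by (blast intro: Ck_add)
lemma smooth_mult: "smooth_fun f \<Longrightarrow> smooth_fun g \<Longrightarrow> smooth_fun (\<lambda>x. f x * g x)"
  unfolding smooth_fun_def by (blast intro: Ck_mult)
lemma smooth_cmult: "smooth_fun f \<Longrightarrow> smooth_fun (\<lambda>x. c * f x)"
  using Ck_cmult by (auto simp: smooth_fun_def)
lemma smooth_inner: "smooth_fun (\<lambda>x::'a::euclidean_space. x \<bullet> v + c)"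
  using Ck_inner by (auto simp: smooth_fun_def)

lemma smooth_sqdist: "smooth_fun (\<lambda>x::'a::euclidean_space. (x - p) \<bullet> (x - p))"
proof -
  have D: "((\<lambda>x::'a. (x - p) \<bullet> (x - p)) has_derivative (\<lambda>h. 2 * ((x - p) \<bullet> h))) (at x)" for x
    by (auto intro!: derivative_eq_intros simp: inner_commute)
  have PE: "pd (\<lambda>x::'a. (x - p) \<bullet> (x - p)) i = (\<lambda>x. x \<bullet> (2 *\<^sub>R i) + (- 2 * (p \<bullet> i)))" for i
    by (rule ext, subst pd_eq[OF D]) (simp add: inner_diff_left inner_diff_right inner_commute)
  have dd: "\<forall>x. (\<lambda>x::'a. (x - p) \<bullet> (x - p)) differentiable (at x)" using D unfolding differentiable_def by blast
  have "(\<lambda>x::'a. (x - p) \<bullet> (x - p)) \<in> Ck (Suc k)" for k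
    unfolding Ck_Suc_iff PE using dd diff_cont[OF dd] Ck_inner by blast
  then show ?thesis unfolding smooth_fun_def using Ck_mono by blast
qed

lemma E_Ck: "E Q \<in> Ck k"
proof (induction k arbitrary: Q)
  case 0
  show ?case using E_deriv by (metis Ck.simps(1) diff_cont mem_Collect_eq real_differentiable_def)
next
  case (Suc k)
  have D: "(E Q has_derivative (\<lambda>h. E (Rp Q) x * h)) (at x)" for x
    using E_deriv[of Q x] by (simp add: has_field_derivative_def)
  have "pd (E Q) 1 = E (Rp Q)" by (rule ext, subst pd_eq[OF D]) simp
  moreover have dd: "\<forall>x. E Q differentiable (at x)" using D unfolding differentiable_def by blast
  ultimately show ?case unfolding Ck_Suc_iff using Suc diff_cont[OF dd] by simp
qed

lemma E_smooth: "smooth_fun (E Q)"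
  using E_Ck by (auto simp: smooth_fun_def)

definition psi :: "real \<Rightarrow> real" where "psi = E 1"

lemma psi_eq: "psi t = (if t > 0 then exp (-1/t) else 0)"
  by (simp add: psi_def E_def)

lemma psi_smooth: "smooth_fun psi"
  unfolding psi_def by (rule E_smooth)

lemma psi_nonneg: "psi t \<ge> 0" by (simp add: psi_eq)
lemma psi_le1: "psi t \<le> 1" by (simp add: psi_eq)

lemma psi_lower: "t \<ge> u \<Longrightarrow> u > 0 \<Longrightarrow> psi t \<ge> exp (-1/u)"
  by (simp add: psi_eq frac_le)

lemma smooth_affine_comp: "smooth_fun G \<Longrightarrow> smooth_fun (\<lambda>s::real. G (K * s + c))"
proof -
  assume G: "smooth_fun G"
  have "smooth_fun (\<lambda>s::real. G (s \<bullet> K + c))" by (rule smooth_comp[OF smooth_inner G])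
  then show ?thesis by (simp add: mult.commute)
qed

lemma smooth_from_deriv:
  fixes G g :: "real \<Rightarrow> real"
  assumes D: "\<And>x. (G has_real_derivative g x) (at x)" and g: "smooth_fun g"
  shows "smooth_fun G"
proof -
  have D': "(G has_derivative (\<lambda>h. g x * h)) (at x)" for x
    using D[of x] by (simp add: has_field_derivative_def)
  have PE: "pd G 1 = g" by (rule ext, subst pd_eq[OF D']) simp
  have dd: "\<forall>x. G differentiable (at x)" using D' unfolding differentiable_def by blast
  have "G \<in> Ck (Suc k)" for k
    unfolding Ck_Suc_iff using dd diff_cont[OF dd] g PE by (simp add: smooth_fun_def)
  then show ?thesis unfolding smooth_fun_def using Ck_mono by blast
qed

definition rho :: "real \<Rightarrow> real \<Rightarrow> real \<Rightarrow> real \<Rightarrow> real" where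
  "rho A B K s = psi (K*(s-A)) * psi (K*(B-s))"

definition II :: "real \<Rightarrow> real \<Rightarrow> real \<Rightarrow> real \<Rightarrow> real" where
  "II A B K s = integral {0..s} (rho A B K)"

lemma rho_smooth: "smooth_fun (rho A B K)"
proof -
  have "smooth_fun (\<lambda>s. psi (K * s + (-K*A)) * psi ((-K) * s + K * B))"
    by (intro smooth_mult smooth_affine_comp psi_smooth)
  moreover have "(\<lambda>s. psi (K * s + (-K*A)) * psi ((-K) * s + K * B)) = rho A B K"
    by (rule ext) (simp add: rho_def algebra_simps)
  ultimately show ?thesis by simp
qed

lemma rho_cont: "continuous_on S (rho A B K)"
proof -
  have "rho A B K \<in> Ck 0" using rho_smooth smooth_fun_def by blast
  then show ?thesis using continuous_on_subset by fastforce
qed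

lemma rho_nonneg: "rho A B K s \<ge> 0" by (simp add: rho_def psi_nonneg)
lemma rho_le1: "rho A B K s \<le> 1" by (simp add: rho_def psi_nonneg psi_le1 mult_le_one)

context
  fixes A B K \<eta> :: real
  assumes A: "A > 0" and eta: "\<eta> > 0" and K: "K > 0" and AB: "A + 2*\<eta> \<le> B - \<eta>"
begin

lemma rho_zero: "s \<le> A \<or> s \<ge> B \<Longrightarrow> rho A B K s = 0"
  using K by (auto simp: rho_def psi_eq zero_less_mult_iff)

lemma rho_lower: "A + \<eta> \<le> s \<Longrightarrow> s \<le> B - \<eta> \<Longrightarrow> rho A B K s \<ge> exp (-2/(K*\<eta>))"
proof -
  assume s: "A + \<eta> \<le> s" "s \<le> B - \<eta>"
  have "psi (K*(s-A)) \<ge> exp (-1/(K*\<eta>))" using s K eta by (intro psi_lower) auto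
  moreover have "psi (K*(B-s)) \<ge> exp (-1/(K*\<eta>))" using s K eta by (intro psi_lower) auto
  ultimately have "psi (K*(s-A)) * psi (K*(B-s)) \<ge> exp (-1/(K*\<eta>)) * exp (-1/(K*\<eta>))"
    by (intro mult_mono) (auto simp: psi_nonneg)
  moreover have "exp (-1/(K*\<eta>)) * exp (-1/(K*\<eta>)) = exp (-2/(K*\<eta>))"
    by (subst mult_exp_exp) simp
  ultimately show ?thesis by (simp add: rho_def)
qed

lemma II_zero: "s \<le> A \<Longrightarrow> II A B K s = 0"
proof -
  assume s: "s \<le> A"
  have "integral {0..s} (rho A B K) = integral {0..s} (\<lambda>x. 0)"
    by (rule integral_cong) (use s in \<open>simp add: rho_zero\<close>)
  then show ?thesis by (simp add: II_def)
qed

lemma II_deriv: "(II A B K has_real_derivative rho A B K s) (at s)"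
proof (cases "s < A")
  case True
  have "((\<lambda>x. 0) has_real_derivative 0) (at s)" by simp
  then have "(II A B K has_real_derivative 0) (at s)"
    by (rule has_field_derivative_transform_within_open[where S="{..<A}"]) (use True II_zero in simp_all)
  then show ?thesis using True rho_zero by simp
next
  case False
  then have s: "s > 0" using A by simp
  have d: "((\<lambda>x. integral {0..x} (rho A B K)) has_real_derivative rho A B K s) (at s within {0..s+1})"
    by (rule integral_has_real_derivative[OF rho_cont]) (use s in simp)
  have "s \<in> interior {0..s+1}" using s by simp
  then have e: "at s within {0..s+1} = at s" by (rule at_within_interior)
  have f: "II A B K = (\<lambda>x. integral {0..x} (rho A B K))" by (rule ext) (simp add: II_def)
  show ?thesis using d unfolding e f .
qed

lemma II_nonneg: "II A B K s \<ge> 0"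
  unfolding II_def by (rule integral_nonneg) (auto intro: integrable_continuous_real rho_cont rho_nonneg)

lemma II_mono: "s \<le> t \<Longrightarrow> II A B K s \<le> II A B K t"
proof (cases "s < 0")
  case True then show ?thesis using II_zero A II_nonneg by simp
next
  case False
  assume st: "s \<le> t"
  show ?thesis unfolding II_def
    by (rule integral_subset_le) (use False st in \<open>auto intro: integrable_continuous_real rho_cont rho_nonneg\<close>)
qed

lemma II_const: "s \<ge> B \<Longrightarrow> II A B K s = II A B K B"
proof -
  assume s: "s \<ge> B"
  have B0: "0 \<le> B" using A eta AB by simp
  have "integral {0..B} (rho A B K) + integral {B..s} (rho A B K) = integral {0..s} (rho A B K)"
    using Henstock_Kurzweil_Integration.integral_combine[where a=0 and c=B and b=s and f="rho A B K"] s B0 integrable_continuous_real[OF rho_cont] by simp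
  moreover have "integral {B..s} (rho A B K) = integral {B..s} (\<lambda>x. 0)"
    by (rule integral_cong) (simp add: rho_zero)
  ultimately show ?thesis by (simp add: II_def)
qed

lemma II_interval_lower:
  assumes "0 \<le> u" "A + \<eta> \<le> u" "u \<le> v" "v \<le> B - \<eta>" "v \<le> s"
  shows "II A B K s \<ge> (v - u) * exp (-2/(K*\<eta>))"
proof -
  have L: "x \<in> {u..v} \<Longrightarrow> exp (-2/(K*\<eta>)) \<le> rho A B K x" for x
    using assms by (intro rho_lower) auto
  have "integral {u..v} (\<lambda>x. exp (-2/(K*\<eta>))) \<le> integral {u..v} (rho A B K)"
    by (rule integral_le[OF _ _ L]) (auto intro!: integrable_continuous_real rho_cont)
  also have "\<dots> \<le> integral {0..s} (rho A B K)"
    by (rule integral_subset_le) (use assms in \<open>auto intro: integrable_continuous_real rho_cont rho_nonneg\<close>)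
  finally show ?thesis using assms by (simp add: II_def content_real)
qed

end

lemma bump1D:
  fixes b :: real
  assumes b: "b > 2"
  shows "\<exists>G g \<theta> \<kappa>. (\<forall>s. (G has_real_derivative g s) (at s)) \<and> smooth_fun G \<and> \<theta> < 1 \<and> \<kappa> > 0 \<and>
     G 0 = 1 \<and> (\<forall>s. 0 \<le> G s \<and> G s \<le> 1) \<and> (\<forall>s. s \<ge> b\<^sup>2 \<longrightarrow> G s = 0 \<and> g s = 0) \<and>
     (\<forall>s. s \<ge> b\<^sup>2/4 \<longrightarrow> G s \<le> 1 - \<kappa>) \<and> (\<forall>s. s \<ge> 0 \<longrightarrow> 2 * sqrt s * \<bar>g s\<bar> \<le> \<theta>)"
proof -
  define B where "B = b\<^sup>2"
  define gap where "gap = B - 2*b"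
  have gap: "gap > 0" using b unfolding gap_def B_def by (simp add: power2_eq_square)
  have B0: "B > 0" using b by (simp add: B_def)
  define a0 where "a0 = min gap B / 16"
  have a0: "a0 > 0" "a0 \<le> gap/16" "a0 \<le> B/16" using gap B0 by (auto simp: a0_def)
  define L where "L = (8*b + 2*gap)/gap + 1"
  have L: "L > 0" using b gap by (simp add: L_def add_pos_pos)
  define K where "K = L / a0"
  have K: "K > 0" using L a0 by (simp add: K_def)
  have Ka: "K * a0 = L" using a0 by (simp add: K_def)
  define m where "m = exp (-2/(K*a0))"
  have m: "m \<ge> 1 - 2/L" unfolding m_def Ka using exp_ge_add_one_self[of "-2/L"] by simp
  have m0: "m > 0" by (simp add: m_def)
  have hAB: "a0 + 2*a0 \<le> B - a0" using a0 by simp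
  note IL = II_interval_lower[OF a0(1) a0(1) K hAB]
  define Z where "Z = II a0 B K B"
  have Zl: "Z \<ge> (B - a0 - (a0 + a0)) * m"
    unfolding Z_def m_def using IL[of "a0+a0" "B - a0" B] a0 by simp
  have X: "B - 3*a0 \<ge> 2*b + gap/2" using a0 gap unfolding gap_def by (simp add: field_simps)
  have c1: "2/L < 1" using L b gap by (simp add: L_def field_simps)
  have key: "(2*b + gap/2) * (1 - 2/L) > 2*b"
  proof -
    have "L * gap = 8*b + 3*gap" using gap by (simp add: L_def field_simps)
    then have "L * (gap/2) > 2 * (2*b + gap/2)" using gap by simp
    then have "gap/2 > (2*b + gap/2) * (2/L)" using L by (simp add: field_simps)
    then show ?thesis by (simp add: algebra_simps)
  qed
  have "(B - 3*a0) * m \<ge> (2*b + gap/2) * (1 - 2/L)"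
    by (rule mult_mono) (use X m c1 b gap in auto)
  then have Zb: "Z > 2*b" using Zl key by simp
  have Z0: "Z > 0" using Zb b by simp
  define G where "G s = 1 - II a0 B K s / Z" for s
  define g where "g s = - (1/Z) * rho a0 B K s" for s
  have D: "(G has_real_derivative g s) (at s)" for s
    unfolding G_def[abs_def] g_def
    using II_deriv[OF a0(1) a0(1) K hAB, of s] Z0
    by (auto intro!: derivative_eq_intros simp: field_simps)
  have sg: "smooth_fun g" unfolding g_def[abs_def] by (intro smooth_cmult rho_smooth)
  have sG: "smooth_fun G" by (rule smooth_from_deriv[OF D sg])
  have II0: "II a0 B K s \<ge> 0" for s by (rule II_nonneg[OF a0(1) a0(1) K hAB])
  have IIZ: "II a0 B K s \<le> Z" for s
  proof -
    have "II a0 B K s \<le> II a0 B K (max s B)" by (rule II_mono[OF a0(1) a0(1) K hAB]) simp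
    also have "\<dots> = Z" unfolding Z_def by (rule II_const[OF a0(1) a0(1) K hAB]) simp
    finally show ?thesis .
  qed
  have G01: "0 \<le> G s \<and> G s \<le> 1" for s
    using II0[of s] IIZ[of s] Z0 by (simp add: G_def field_simps)
  have G0: "G 0 = 1" using II_zero[OF a0(1) a0(1) K hAB, of 0] a0 by (simp add: G_def)
  have Gb: "G s = 0 \<and> g s = 0" if "s \<ge> b\<^sup>2" for s
    using II_const[OF a0(1) a0(1) K hAB, of s] rho_zero[OF a0(1) a0(1) K hAB, of s] that Z0
    by (simp add: G_def g_def Z_def B_def)
  define \<kappa> where "\<kappa> = a0 * m / Z"
  have kap: "\<kappa> > 0" using a0 m0 Z0 by (simp add: \<kappa>_def)
  have Gk: "G s \<le> 1 - \<kappa>" if "s \<ge> b\<^sup>2/4" for s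
  proof -
    have "II a0 B K s \<ge> (a0 + 2*a0 - (a0 + a0)) * m"
      unfolding m_def using IL[of "a0+a0" "a0 + 2*a0" s] a0 that by (simp add: B_def)
    then show ?thesis using Z0 by (simp add: G_def \<kappa>_def field_simps)
  qed
  define \<theta> where "\<theta> = 2*b/Z"
  have th: "\<theta> < 1" using Zb Z0 by (simp add: \<theta>_def)
  have gr: "2 * sqrt s * \<bar>g s\<bar> \<le> \<theta>" if "s \<ge> 0" for s
  proof (cases "s \<ge> b\<^sup>2")
    case True then show ?thesis using Gb Zb b by (simp add: \<theta>_def)
  next
    case False
    have "sqrt s \<le> b" using False b real_sqrt_le_mono[of s "b\<^sup>2"] by simp
    moreover have "\<bar>g s\<bar> \<le> 1/Z" using Z0 rho_nonneg[of a0 B K s] rho_le1[of a0 B K s] by (simp add: g_def divide_right_mono)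
    ultimately have "sqrt s * \<bar>g s\<bar> \<le> b * (1/Z)" using b by (intro mult_mono) auto
    then show ?thesis by (simp add: \<theta>_def)
  qed
  show ?thesis
    apply (rule exI[of _ G], rule exI[of _ g], rule exI[of _ \<theta>], rule exI[of _ \<kappa>])
    using D sG th kap G0 G01 Gb Gk gr by blast
qed

definition hasgrad :: "('a::euclidean_space \<Rightarrow> real) \<Rightarrow> ('a \<Rightarrow> 'a) \<Rightarrow> bool" where
  "hasgrad f g \<longleftrightarrow> (\<forall>x. (f has_derivative (\<lambda>h. g x \<bullet> h)) (at x))"

lemma grad_eq: "hasgrad f g \<Longrightarrow> grad f = g"
proof (rule ext)
  fix x assume "hasgrad f g"
  then have D: "(f has_derivative (\<lambda>h. g x \<bullet> h)) (at x)" by (simp add: hasgrad_def)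
  have "grad f x = (\<Sum>i\<in>Basis. (g x \<bullet> i) *\<^sub>R i)"
    unfolding grad_def by (simp add: pd_eq[OF D])
  also have "\<dots> = g x" by (rule euclidean_representation)
  finally show "grad f x = g x" .
qed

lemma grad_comp_inner: "i \<in> Basis \<Longrightarrow> grad f x \<bullet> i = frechet_derivative f (at x) i"
  unfolding grad_def by (simp add: inner_sum_left inner_Basis if_distrib cong: if_cong)

lemma hasgrad_add: "hasgrad f g \<Longrightarrow> hasgrad f' g' \<Longrightarrow> hasgrad (\<lambda>x. f x + f' x) (\<lambda>x. g x + g' x)"
  unfolding hasgrad_def by (auto intro!: derivative_eq_intros simp: inner_add_left)

lemma hasgrad_cmult: "hasgrad f g \<Longrightarrow> hasgrad (\<lambda>x. c * f x) (\<lambda>x. c *\<^sub>R g x)"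
  unfolding hasgrad_def by (auto intro!: derivative_eq_intros)

lemma hasgrad_const: "hasgrad (\<lambda>x::'a::euclidean_space. c) (\<lambda>x. 0)"
proof -
  have e: "((\<bullet>) (0::'a)) = (\<lambda>h. 0)" by (rule ext) simp
  show ?thesis unfolding hasgrad_def e by simp
qed

lemma hasgrad_sqdist: "hasgrad (\<lambda>x. (x - p) \<bullet> (x - p)) (\<lambda>x. 2 *\<^sub>R (x - p))"
  unfolding hasgrad_def by (auto intro!: derivative_eq_intros simp: inner_commute)

lemma hasgrad_comp:
  assumes D: "\<And>s. (G has_real_derivative g s) (at s)" and q: "hasgrad q gq"
  shows "hasgrad (\<lambda>x. G (q x)) (\<lambda>x. g (q x) *\<^sub>R gq x)"
  unfolding hasgrad_def
proof
  fix x
  have Dq: "(q has_derivative (\<lambda>h. gq x \<bullet> h)) (at x)" using q by (simp add: hasgrad_def)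
  have DG: "(G has_derivative (\<lambda>h. g (q x) * h)) (at (q x))" using D[of "q x"] by (simp add: has_field_derivative_def)
  show "((\<lambda>x. G (q x)) has_derivative (\<lambda>h. (g (q x) *\<^sub>R gq x) \<bullet> h)) (at x)"
    using diff_chain_at[OF Dq DG] by (simp add: o_def)
qed

lemma test0I: "smooth_fun f \<Longrightarrow> bounded {x. f x \<noteq> 0} \<Longrightarrow> f \<in> test0"
  by (simp add: test0_def)

lemma test1_gradI:
  assumes "smooth_fun f" "bounded {x. grad f x \<noteq> 0}"
  shows "grad f \<in> test1"
  unfolding test1_def using assms smooth_Suc[OF assms(1)] by (simp add: grad_comp_inner)

lemma flat_lower:
  fixes f :: "'a::euclidean_space \<Rightarrow> real"
  assumes sf: "smooth_fun f" and bf: "bounded {x. f x \<noteq> 0}" and f1: "\<forall>x. \<bar>f x\<bar> \<le> 1"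
    and g: "hasgrad f g" and bg: "bounded {x. g x \<noteq> 0}" and g1: "\<forall>x. norm (g x) \<le> 1"
  shows "ereal (H f) \<le> flat 1 H"
  unfolding flat_def
proof (rule INF_greatest)
  fix S :: "('a \<Rightarrow> 'a) \<Rightarrow> real" assume "S \<in> {S. current1 S}"
  have ge: "grad f = g" by (rule grad_eq[OF g])
  have fin: "f \<in> {f\<in>test0. \<forall>x. \<bar>f x\<bar> \<le> 1}" using sf bf f1 by (simp add: test0I)
  have gin: "grad f \<in> {w\<in>test1. \<forall>x. norm (w x) \<le> 1}" using test1_gradI[OF sf] bg g1 ge by simp
  have a: "ereal (H f - bdry S f) \<le> mass0 (\<lambda>f. H f - bdry S f)"
    unfolding mass0_def using SUP_upper[OF fin, of "\<lambda>f. ereal (H f - bdry S f)"] by simp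
  have b: "ereal (S (grad f)) \<le> mass1 S"
    unfolding mass1_def using SUP_upper[OF gin, of "\<lambda>w. ereal (S w)"] by simp
  have "ereal (H f) = ereal (H f - bdry S f) + ereal (S (grad f))" by (simp add: bdry_def)
  also have "\<dots> \<le> mass0 (\<lambda>f. H f - bdry S f) + mass1 S" by (rule add_mono[OF a b])
  finally show "ereal (H f) \<le> mass0 (\<lambda>f. H f - bdry S f) + ereal 1 * mass1 S" by simp
qed

lemma cur0_eval:
  assumes "finite W" "{x. U x \<noteq> 0} \<subseteq> W"
  shows "cur0 U f = (\<Sum>x\<in>W. of_int (U x) * f x)"
  unfolding cur0_def by (rule sum.mono_neutral_left) (use assms in auto)

lemma cur0_pt_eval:
  assumes "finite W" "{x. T x \<noteq> 0} \<subseteq> W" "p \<in> W"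
  shows "cur0 (\<lambda>x. T x - pt p x) f = (\<Sum>x\<in>W. of_int (T x) * f x) - f p"
proof -
  have "{x. T x - pt p x \<noteq> 0} \<subseteq> W" using assms by (auto simp: pt_def split: if_splits)
  then have "cur0 (\<lambda>x. T x - pt p x) f = (\<Sum>x\<in>W. of_int (T x - pt p x) * f x)" by (rule cur0_eval[OF assms(1)])
  also have "\<dots> = (\<Sum>x\<in>W. of_int (T x) * f x) - (\<Sum>x\<in>W. of_int (pt p x) * f x)"
    by (simp add: sum_subtractf left_diff_distrib)
  also have "(\<Sum>x\<in>W. of_int (pt p x) * f x) = f p"
  proof -
    have "(\<Sum>x\<in>W. of_int (pt p x) * f x) = (\<Sum>x\<in>W. if x = p then f x else 0)"
      by (rule sum.cong) (auto simp: pt_def)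
    then show ?thesis using assms by simp
  qed
  finally show ?thesis .
qed

lemma flat_upper: "flat 1 (cur0 (\<lambda>x. 0 - pt p x)) \<le> 1"
proof -
  let ?S0 = "\<lambda>w::'a::euclidean_space \<Rightarrow> 'a. 0::real"
  have c: "current1 ?S0" by (simp add: current1_def)
  have m1: "mass1 ?S0 \<le> 0" unfolding mass1_def by (rule SUP_least) simp
  have ev: "cur0 (\<lambda>x. 0 - pt p x) f = - f p" for f :: "'a \<Rightarrow> real"
    using cur0_pt_eval[of "{p}" "\<lambda>x. 0" p f] by simp
  have m0: "mass0 (\<lambda>f. cur0 (\<lambda>x. 0 - pt p x) f - bdry ?S0 f) \<le> 1"
    unfolding mass0_def by (rule SUP_least) (auto simp: ev[simplified] bdry_def abs_le_iff)
  have "flat 1 (cur0 (\<lambda>x. 0 - pt p x)) \<le> mass0 (\<lambda>f. cur0 (\<lambda>x. 0 - pt p x) f - bdry ?S0 f) + ereal 1 * mass1 ?S0"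
    unfolding flat_def by (rule INF_lower) (simp add: c)
  also have "\<dots> \<le> 1 + 0" using m0 m1 by (intro add_mono) auto
  finally show ?thesis by simp
qed

lemma psi_deriv: "(psi has_real_derivative E (Rp 1) t) (at t)"
  unfolding psi_def by (rule E_deriv)

lemma dpsi_eq: "E (Rp 1) t = (if t > 0 then (1/t)^2 * exp (-1/t) else 0)"
  by (simp add: E_def Rp_def power2_eq_square)

lemma dpsi_bound: "0 \<le> E (Rp 1) t \<and> E (Rp 1) t \<le> 4"
proof (cases "t > 0")
  case False then show ?thesis by (simp add: dpsi_eq)
next
  case True
  define u where "u = 1/t"
  have u: "u > 0" using True by (simp add: u_def)
  have "1 + u/2 \<le> exp (u/2)" by (rule exp_ge_add_one_self)
  then have "u \<le> 2 * exp (u/2)" by linarith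
  then have "u^2 \<le> (2 * exp (u/2))^2" using u by (intro power_mono) auto
  also have "\<dots> = 4 * exp u" by (simp add: power2_eq_square mult_exp_exp)
  finally have "u^2 * exp (-u) \<le> 4 * exp u * exp (-u)" by (intro mult_right_mono) auto
  also have "\<dots> = 4" by (simp add: mult_exp_exp)
  finally show ?thesis using True by (simp add: dpsi_eq u_def[symmetric] divide_inverse[symmetric])
qed

definition gam :: "'a::euclidean_space \<Rightarrow> real \<Rightarrow> 'a \<Rightarrow> real" where
  "gam x0 r x = psi (r\<^sup>2 + (-1) * ((x - x0) \<bullet> (x - x0)))"

definition ggam :: "'a::euclidean_space \<Rightarrow> real \<Rightarrow> 'a \<Rightarrow> 'a" where
  "ggam x0 r x = E (Rp 1) (r\<^sup>2 + (-1) * ((x - x0) \<bullet> (x - x0))) *\<^sub>R (0 + (-1) *\<^sub>R (2 *\<^sub>R (x - x0)))"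

lemma gam_smooth: "smooth_fun (gam x0 r)"
  unfolding gam_def[abs_def]
  by (intro smooth_comp[OF _ psi_smooth] smooth_add smooth_const smooth_cmult smooth_sqdist)

lemma gam_grad: "hasgrad (gam x0 r) (ggam x0 r)"
  unfolding gam_def[abs_def] ggam_def[abs_def]
  by (intro hasgrad_comp[OF psi_deriv] hasgrad_add hasgrad_const hasgrad_cmult hasgrad_sqdist)

lemma sqdist_eq: "(x - p) \<bullet> (x - p) = (dist x p)\<^sup>2"
  by (simp add: dist_norm power2_norm_eq_inner)

lemma gam_zero: "dist x x0 \<ge> r \<Longrightarrow> r \<ge> 0 \<Longrightarrow> gam x0 r x = 0 \<and> ggam x0 r x = 0"
proof -
  assume "dist x x0 \<ge> r" "r \<ge> 0"
  then have "r\<^sup>2 \<le> (dist x x0)\<^sup>2" by (intro power_mono) auto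
  then show ?thesis by (simp add: gam_def ggam_def psi_eq dpsi_eq sqdist_eq)
qed

lemma gam_01: "0 \<le> gam x0 r x \<and> gam x0 r x \<le> 1"
  by (simp add: gam_def psi_nonneg psi_le1)

lemma gam_pos: "r > 0 \<Longrightarrow> gam x0 r x0 > 0"
  by (simp add: gam_def psi_eq)

lemma ggam_bound: "r \<ge> 0 \<Longrightarrow> norm (ggam x0 r x) \<le> 8 * r"
proof (cases "dist x x0 \<ge> r")
  case True
  assume "r \<ge> 0" then show ?thesis using gam_zero[OF True] by simp
next
  case False
  assume r: "r \<ge> 0"
  have "norm (ggam x0 r x) = \<bar>E (Rp 1) (r\<^sup>2 + (-1) * ((x - x0) \<bullet> (x - x0)))\<bar> * (2 * dist x x0)"
    by (simp add: ggam_def dist_norm abs_mult)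
  also have "\<dots> \<le> 4 * (2 * r)"
    using dpsi_bound[of "r\<^sup>2 + (-1) * ((x - x0) \<bullet> (x - x0))"] False
    by (intro mult_mono) auto
  finally show ?thesis by simp
qed

definition bet :: "(real \<Rightarrow> real) \<Rightarrow> 'a::euclidean_space \<Rightarrow> 'a \<Rightarrow> real" where
  "bet G p x = G ((x - p) \<bullet> (x - p))"

definition gbet :: "(real \<Rightarrow> real) \<Rightarrow> 'a::euclidean_space \<Rightarrow> 'a \<Rightarrow> 'a" where
  "gbet g p x = g ((x - p) \<bullet> (x - p)) *\<^sub>R (2 *\<^sub>R (x - p))"

locale bumpctx =
  fixes G g :: "real \<Rightarrow> real" and \<theta> \<kappa> b :: real
  assumes D: "\<And>s. (G has_real_derivative g s) (at s)" and sG: "smooth_fun G" and th: "\<theta> < 1"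
    and kap: "\<kappa> > 0" and G0: "G 0 = 1" and G01: "\<And>s. 0 \<le> G s \<and> G s \<le> 1"
    and Gb: "\<And>s. s \<ge> b\<^sup>2 \<Longrightarrow> G s = 0 \<and> g s = 0"
    and Gk: "\<And>s. s \<ge> b\<^sup>2/4 \<Longrightarrow> G s \<le> 1 - \<kappa>"
    and gr: "\<And>s. s \<ge> 0 \<Longrightarrow> 2 * sqrt s * \<bar>g s\<bar> \<le> \<theta>"
    and b: "b > 2"
begin

lemma bet_smooth: "smooth_fun (bet G p)"
  unfolding bet_def[abs_def] by (rule smooth_comp[OF smooth_sqdist sG])

lemma bet_grad: "hasgrad (bet G p) (gbet g p)"
  unfolding bet_def[abs_def] gbet_def[abs_def] by (rule hasgrad_comp[OF D hasgrad_sqdist])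

lemma bet_zero: "dist x p \<ge> b \<Longrightarrow> bet G p x = 0 \<and> gbet g p x = 0"
proof -
  assume "dist x p \<ge> b"
  then have "b\<^sup>2 \<le> (dist x p)\<^sup>2" using b by (intro power_mono) auto
  then show ?thesis using Gb by (simp add: bet_def gbet_def sqdist_eq)
qed

lemma bet_01: "0 \<le> bet G p x \<and> bet G p x \<le> 1"
  using G01 by (simp add: bet_def)

lemma bet_center: "bet G p p = 1"
  using G0 by (simp add: bet_def)

lemma bet_k: "dist x p \<ge> b/2 \<Longrightarrow> bet G p x \<le> 1 - \<kappa>"
proof -
  assume "dist x p \<ge> b/2"
  then have "(b/2)\<^sup>2 \<le> (dist x p)\<^sup>2" using b by (intro power_mono) auto
  then show ?thesis using Gk by (simp add: bet_def sqdist_eq power_divide)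
qed

lemma gbet_bound: "norm (gbet g p x) \<le> \<theta>"
proof -
  have "norm (gbet g p x) = 2 * sqrt ((dist x p)\<^sup>2) * \<bar>g ((dist x p)\<^sup>2)\<bar>"
    by (simp add: gbet_def sqdist_eq dist_norm abs_mult)
  also have "\<dots> \<le> \<theta>" by (rule gr) simp
  finally show ?thesis .
qed

lemma bet_bounded: "bounded {x. bet G p x \<noteq> 0}"
proof -
  have "{x. bet G p x \<noteq> 0} \<subseteq> ball p b" using bet_zero by (force simp: dist_commute)
  then show ?thesis using bounded_subset bounded_ball by blast
qed

lemma gbet_bounded: "bounded {x. gbet g p x \<noteq> 0}"
proof -
  have "{x. gbet g p x \<noteq> 0} \<subseteq> ball p b" using bet_zero by (force simp: dist_commute)
  then show ?thesis using bounded_subset bounded_ball by blast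
qed

end

lemma gam_bounded: "r \<ge> 0 \<Longrightarrow> bounded {x. gam x0 r x \<noteq> 0}"
proof -
  assume r: "r \<ge> 0"
  have "{x. gam x0 r x \<noteq> 0} \<subseteq> ball x0 r" using gam_zero[OF _ r] by (force simp: dist_commute)
  then show ?thesis using bounded_subset bounded_ball by blast
qed

lemma ggam_bounded: "r \<ge> 0 \<Longrightarrow> bounded {x. ggam x0 r x \<noteq> 0}"
proof -
  assume r: "r \<ge> 0"
  have "{x. ggam x0 r x \<noteq> 0} \<subseteq> ball x0 r" using gam_zero[OF _ r] by (force simp: dist_commute)
  then show ?thesis using bounded_subset bounded_ball by blast
qed

context bumpctx begin

lemma norm4: "norm (v1 + v2 + v3 + v4) \<le> norm v1 + norm v2 + norm v3 + norm (v4::'a::real_normed_vector)"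
  using norm_triangle_ineq[of "v1+v2+v3" v4] norm_triangle_ineq[of "v1+v2" v3] norm_triangle_ineq[of v1 v2] by linarith

lemma th0: "\<theta> \<ge> 0"
  using gbet_bound[of 0 0] norm_ge_zero order_trans by blast

lemma adm:
  fixes q1 q2 q3 x0 :: "'a::euclidean_space" and H :: "('a \<Rightarrow> real) \<Rightarrow> real"
  assumes d12: "dist q1 q2 \<ge> 2*b" and d13: "dist q1 q3 \<ge> 2*b" and d23: "dist q2 q3 \<ge> 2*b"
    and r: "r > 0" and ge: "\<bar>e\<bar> * (8*r) + \<theta> \<le> 1"
    and ec: "e = 0 \<or> (dist x0 q1 \<ge> b \<and> r \<le> b/2 \<and> \<bar>e\<bar> \<le> \<kappa> \<and> \<bar>e\<bar> \<le> 1/2)"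
  shows "ereal (H (\<lambda>x. (-1) * bet G q1 x + (1/2) * bet G q2 x + (1/2) * bet G q3 x + e * gam x0 r x)) \<le> flat 1 H"
proof (rule flat_lower)
  let ?f = "\<lambda>x. (-1) * bet G q1 x + (1/2) * bet G q2 x + (1/2) * bet G q3 x + e * gam x0 r x"
  let ?g = "\<lambda>x. (-1) *\<^sub>R gbet g q1 x + (1/2) *\<^sub>R gbet g q2 x + (1/2) *\<^sub>R gbet g q3 x + e *\<^sub>R ggam x0 r x"
  show "smooth_fun ?f"
    by (intro smooth_add smooth_cmult bet_smooth gam_smooth)
  show "hasgrad ?f ?g"
    by (intro hasgrad_add hasgrad_cmult bet_grad gam_grad)
  have "bounded ({x. bet G q1 x \<noteq> 0} \<union> {x. bet G q2 x \<noteq> 0} \<union> {x. bet G q3 x \<noteq> 0} \<union> {x. gam x0 r x \<noteq> 0})"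
    unfolding bounded_Un using bet_bounded gam_bounded[OF less_imp_le[OF r]] by blast
  then show "bounded {x. ?f x \<noteq> 0}" by (rule bounded_subset) auto
  have "bounded ({x. gbet g q1 x \<noteq> 0} \<union> {x. gbet g q2 x \<noteq> 0} \<union> {x. gbet g q3 x \<noteq> 0} \<union> {x. ggam x0 r x \<noteq> 0})"
    unfolding bounded_Un using gbet_bounded ggam_bounded[OF less_imp_le[OF r]] by blast
  then show "bounded {x. ?g x \<noteq> 0}" by (rule bounded_subset) auto
  have excl: "\<not> (dist x qa < b \<and> dist x qb < b)" if "dist qa qb \<ge> 2*b" for x qa qb :: 'a
    using that dist_triangle[of qa qb x] dist_commute[of x qa] by linarith
  show "\<forall>x. norm (?g x) \<le> 1"
  proof
    fix x :: 'a
    have n: "norm (?g x) \<le> norm (gbet g q1 x) + (1/2) * norm (gbet g q2 x) + (1/2) * norm (gbet g q3 x) + \<bar>e\<bar> * norm (ggam x0 r x)"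
      using norm4[of "(-1) *\<^sub>R gbet g q1 x" "(1/2) *\<^sub>R gbet g q2 x" "(1/2) *\<^sub>R gbet g q3 x" "e *\<^sub>R ggam x0 r x"] by simp
    have z: "\<not> dist x q < b \<Longrightarrow> bet G q x = 0 \<and> gbet g q x = 0" for q using bet_zero[of x q] by simp
    have t: "norm (gbet g q1 x) + (1/2) * norm (gbet g q2 x) + (1/2) * norm (gbet g q3 x) \<le> \<theta>"
    proof (cases "dist x q1 < b")
      case True
      then have "\<not> dist x q2 < b" "\<not> dist x q3 < b" using excl[OF d12, of x] excl[OF d13, of x] by blast+
      then show ?thesis using z[of q2] z[of q3] gbet_bound[of q1 x] by simp
    next
      case F1: False
      show ?thesis
      proof (cases "dist x q2 < b")
        case True
        then have "\<not> dist x q3 < b" using excl[OF d23, of x] by blast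
        then show ?thesis using F1 z[of q1] z[of q3] gbet_bound[of q2 x] th0 by simp
      next
        case F2: False
        then show ?thesis using F1 z[of q1] z[of q2] gbet_bound[of q3 x] th0 by simp
      qed
    qed
    have "\<bar>e\<bar> * norm (ggam x0 r x) \<le> \<bar>e\<bar> * (8*r)"
      using ggam_bound[of r x0 x] r by (intro mult_left_mono) auto
    then show "norm (?g x) \<le> 1" using n t ge by linarith
  qed
  show "\<forall>x. \<bar>?f x\<bar> \<le> 1"
  proof
    fix x :: 'a
    have b01: "0 \<le> bet G q x \<and> bet G q x \<le> 1" for q by (rule bet_01)
    have z: "\<not> dist x q < b \<Longrightarrow> bet G q x = 0" for q using bet_zero[of x q] by simp
    have cases3: "(dist x q1 < b \<and> bet G q2 x = 0 \<and> bet G q3 x = 0) \<or> (bet G q1 x = 0 \<and> (bet G q2 x = 0 \<or> bet G q3 x = 0))"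
    proof (cases "dist x q1 < b")
      case True
      then have "\<not> dist x q2 < b" "\<not> dist x q3 < b" using excl[OF d12, of x] excl[OF d13, of x] by blast+
      then show ?thesis using True z[of q2] z[of q3] by simp
    next
      case F1: False
      have "\<not> dist x q2 < b \<or> \<not> dist x q3 < b" using excl[OF d23, of x] by blast
      then show ?thesis using F1 z by blast
    qed
    have main: "\<bar>(-1) * bet G q1 x + (1/2) * bet G q2 x + (1/2) * bet G q3 x\<bar> \<le> 1"
      using cases3 b01[of q1] b01[of q2] b01[of q3] by auto
    show "\<bar>?f x\<bar> \<le> 1"
    proof (cases "e = 0 \<or> gam x0 r x = 0")
      case True then show ?thesis using main by auto
    next
      case False
      then have e: "dist x0 q1 \<ge> b" "r \<le> b/2" "\<bar>e\<bar> \<le> \<kappa>" "\<bar>e\<bar> \<le> 1/2" using ec by auto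
      have "dist x x0 < r" using False gam_zero[of r x x0] r by force
      then have "dist x q1 \<ge> b/2" using e dist_triangle[of x0 q1 x] by (simp add: dist_commute)
      then have k: "bet G q1 x \<le> 1 - \<kappa>" by (rule bet_k)
      have eg: "\<bar>e * gam x0 r x\<bar> \<le> \<bar>e\<bar>" using gam_01[of x0 r x] by (simp add: abs_mult mult_left_le)
      show ?thesis using cases3 b01[of q1] b01[of q2] b01[of q3] k eg e by (auto simp: abs_le_iff)
    qed
  qed
qed

end

lemma obj_lower:
  fixes p1 p2 p3 :: "'a::euclidean_space" and T :: "'a \<Rightarrow> int"
  assumes d12: "dist p1 p2 > 4" and d13: "dist p1 p3 > 4" and d23: "dist p2 p3 > 4" and T: "integral0 T"
  shows "\<exists>c\<ge>0. (T \<noteq> (\<lambda>x. 0) \<longrightarrow> c > 0) \<and> ereal (3 + c) \<le> median_obj 1 [pt p1, pt p2, pt p3] T"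
proof -
  define D where "D = min (dist p1 p2) (min (dist p1 p3) (dist p2 p3))"
  have D4: "D > 4" using d12 d13 d23 by (simp add: D_def)
  define b where "b = 1 + D/4"
  have b2: "b > 2" using D4 by (simp add: b_def)
  have e12: "2*b \<le> dist p1 p2" and e13: "2*b \<le> dist p1 p3" and e23: "2*b \<le> dist p2 p3"
    using D4 by (auto simp: b_def D_def)
  obtain G g \<theta> \<kappa> where GG: "\<forall>s. (G has_real_derivative g s) (at s)" "smooth_fun G" "\<theta> < 1" "\<kappa> > 0"
     "G 0 = 1" "\<forall>s. 0 \<le> G s \<and> G s \<le> 1" "\<forall>s. s \<ge> b\<^sup>2 \<longrightarrow> G s = 0 \<and> g s = 0"
     "\<forall>s. s \<ge> b\<^sup>2/4 \<longrightarrow> G s \<le> 1 - \<kappa>" "\<forall>s. s \<ge> 0 \<longrightarrow> 2 * sqrt s * \<bar>g s\<bar> \<le> \<theta>"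
    using bump1D[OF b2] by blast
  interpret bc: bumpctx G g \<theta> \<kappa> b
    by (unfold_locales) (use GG b2 in auto)
  define W where "W = {x. T x \<noteq> 0} \<union> {p1, p2, p3}"
  have W: "finite W" "{x. T x \<noteq> 0} \<subseteq> W" "p1 \<in> W" "p2 \<in> W" "p3 \<in> W"
    using T by (auto simp: W_def integral0_def)
  have far: "bet G q p = 0" if "dist p q \<ge> 2*b" for p q :: 'a
    using bc.bet_zero[of p q] that b2 by simp
  have GEN: "ereal (3 + (\<Sum>x\<in>W. of_int (T x) * ((ua+ub+uc) * gam zz r x))
      - (ua * gam zz r p1 + ub * gam zz r p2 + uc * gam zz r p3)) \<le> median_obj 1 [pt p1, pt p2, pt p3] T"
    if r: "r > 0"
      and c1: "\<bar>ua\<bar> * (8*r) + \<theta> \<le> 1" "ua = 0 \<or> (dist zz p1 \<ge> b \<and> r \<le> b/2 \<and> \<bar>ua\<bar> \<le> \<kappa> \<and> \<bar>ua\<bar> \<le> 1/2)"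
      and c2: "\<bar>ub\<bar> * (8*r) + \<theta> \<le> 1" "ub = 0 \<or> (dist zz p2 \<ge> b \<and> r \<le> b/2 \<and> \<bar>ub\<bar> \<le> \<kappa> \<and> \<bar>ub\<bar> \<le> 1/2)"
      and c3: "\<bar>uc\<bar> * (8*r) + \<theta> \<le> 1" "uc = 0 \<or> (dist zz p3 \<ge> b \<and> r \<le> b/2 \<and> \<bar>uc\<bar> \<le> \<kappa> \<and> \<bar>uc\<bar> \<le> 1/2)"
    for ua ub uc r and zz :: 'a
  proof -
    define f1 where "f1 = (\<lambda>x. (-1) * bet G p1 x + (1/2) * bet G p2 x + (1/2) * bet G p3 x + ua * gam zz r x)"
    define f2 where "f2 = (\<lambda>x. (-1) * bet G p2 x + (1/2) * bet G p1 x + (1/2) * bet G p3 x + ub * gam zz r x)"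
    define f3 where "f3 = (\<lambda>x. (-1) * bet G p3 x + (1/2) * bet G p1 x + (1/2) * bet G p2 x + uc * gam zz r x)"
    have a1: "ereal (cur0 (\<lambda>x. T x - pt p1 x) f1) \<le> flat 1 (cur0 (\<lambda>x. T x - pt p1 x))"
      unfolding f1_def by (rule bc.adm[OF e12 e13 e23 r c1])
    have a2: "ereal (cur0 (\<lambda>x. T x - pt p2 x) f2) \<le> flat 1 (cur0 (\<lambda>x. T x - pt p2 x))"
      unfolding f2_def by (rule bc.adm) (use e12 e13 e23 r c2 in \<open>auto simp: dist_commute\<close>)
    have a3: "ereal (cur0 (\<lambda>x. T x - pt p3 x) f3) \<le> flat 1 (cur0 (\<lambda>x. T x - pt p3 x))"
      unfolding f3_def by (rule bc.adm) (use e12 e13 e23 r c3 in \<open>auto simp: dist_commute\<close>)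
    have sum: "cur0 (\<lambda>x. T x - pt p1 x) f1 + cur0 (\<lambda>x. T x - pt p2 x) f2 + cur0 (\<lambda>x. T x - pt p3 x) f3
        = (\<Sum>x\<in>W. of_int (T x) * (f1 x + f2 x + f3 x)) - f1 p1 - f2 p2 - f3 p3"
      using cur0_pt_eval[OF W(1,2,3), of f1] cur0_pt_eval[OF W(1,2,4), of f2] cur0_pt_eval[OF W(1,2,5), of f3]
      by (simp add: sum.distrib distrib_left)
    have fs: "f1 x + f2 x + f3 x = (ua+ub+uc) * gam zz r x" for x
      by (simp add: f1_def f2_def f3_def algebra_simps)
    have b12: "bet G p1 p2 = 0" "bet G p2 p1 = 0" using far e12 by (auto simp: dist_commute)
    have b13: "bet G p1 p3 = 0" "bet G p3 p1 = 0" using far e13 by (auto simp: dist_commute)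
    have b23: "bet G p2 p3 = 0" "bet G p3 p2 = 0" using far e23 by (auto simp: dist_commute)
    have v: "f1 p1 = -1 + ua * gam zz r p1" "f2 p2 = -1 + ub * gam zz r p2" "f3 p3 = -1 + uc * gam zz r p3"
      using b12 b13 b23 by (simp_all add: f1_def f2_def f3_def bc.bet_center)
    have "ereal (3 + (\<Sum>x\<in>W. of_int (T x) * ((ua+ub+uc) * gam zz r x))
      - (ua * gam zz r p1 + ub * gam zz r p2 + uc * gam zz r p3))
      = ereal (cur0 (\<lambda>x. T x - pt p1 x) f1) + (ereal (cur0 (\<lambda>x. T x - pt p2 x) f2) + (ereal (cur0 (\<lambda>x. T x - pt p3 x) f3) + 0))"
      using sum by (simp add: fs v)
    also have "\<dots> \<le> flat 1 (cur0 (\<lambda>x. T x - pt p1 x)) + (flat 1 (cur0 (\<lambda>x. T x - pt p2 x)) + (flat 1 (cur0 (\<lambda>x. T x - pt p3 x)) + 0))"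
      by (intro add_mono a1 a2 a3 order_refl)
    also have "\<dots> = median_obj 1 [pt p1, pt p2, pt p3] T" by (simp add: median_obj_def)
    finally show ?thesis .
  qed
  show ?thesis
  proof (cases "T = (\<lambda>x. 0)")
    case True
    have "ereal (3 + 0) \<le> median_obj 1 [pt p1, pt p2, pt p3] T"
      using GEN[where r=1 and ua=0 and ub=0 and uc=0 and zz=p1] GG(3) by simp
    then show ?thesis using True by blast
  next
    case False
    then obtain x0 where x0: "T x0 \<noteq> 0" by auto
    have x0W: "x0 \<in> W" using x0 W by auto
    define R where "R = insert (b/2) ((\<lambda>y. dist y x0) ` (W - {x0}))"
    have R: "finite R" "R \<noteq> {}" using W by (auto simp: R_def)
    define r where "r = Min R"
    have r0: "r > 0" unfolding r_def using R b2 by (subst Min_gr_iff) (auto simp: R_def)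
    have rb: "r \<le> b/2" unfolding r_def using Min_le[OF R(1), of "b/2"] by (simp add: R_def)
    have ry: "r \<le> dist y x0" if "y \<in> W" "y \<noteq> x0" for y unfolding r_def using Min_le[OF R(1), of "dist y x0"] that by (simp add: R_def)
    define e0 where "e0 = min (min \<kappa> (1/2)) ((1 - \<theta>)/(8*r))"
    have e0: "e0 > 0" using GG(3,4) r0 by (simp add: e0_def)
    have e0b: "e0 * (8*r) + \<theta> \<le> 1"
    proof -
      have "e0 \<le> (1-\<theta>)/(8*r)" by (simp add: e0_def)
      then have "e0 * (8*r) \<le> (1-\<theta>)/(8*r) * (8*r)" using r0 by (intro mult_right_mono) auto
      also have "\<dots> = 1 - \<theta>" using r0 by simp
      finally show ?thesis by simp
    qed
    define sg where "sg = (of_int (sgn (T x0)) :: real)"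
    have sg1: "\<bar>sg\<bar> = 1" using x0 by (simp add: sg_def sgn_if)
    have sgT: "sg * of_int (T x0) = of_int \<bar>T x0\<bar>" by (simp add: sg_def sgn_if)
    define e where "e p = (if dist x0 p \<ge> b then sg * e0 else 0)" for p
    have ec: "\<bar>e p\<bar> * (8*r) + \<theta> \<le> 1 \<and> (e p = 0 \<or> (dist x0 p \<ge> b \<and> r \<le> b/2 \<and> \<bar>e p\<bar> \<le> \<kappa> \<and> \<bar>e p\<bar> \<le> 1/2))" for p
      using e0b e0 GG(3) rb sg1 by (auto simp: e_def abs_mult e0_def)
    have gp: "e p * gam x0 r p = 0" if "p \<in> W" for p
    proof (cases "dist x0 p \<ge> b")
      case True
      then have "p \<noteq> x0" using b2 by auto
      then have "dist p x0 \<ge> r" using ry that by blast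
      then show ?thesis using bc.th0 gam_zero[of r p x0] r0 by simp
    qed (simp add: e_def)
    have gy: "gam x0 r y = 0" if "y \<in> W - {x0}" for y using ry[of y] that gam_zero[of r y x0] r0 by auto
    define E where "E = e p1 + e p2 + e p3"
    have sumW: "(\<Sum>x\<in>W. of_int (T x) * (E * gam x0 r x)) = of_int (T x0) * (E * gam x0 r x0)"
      using sum.remove[OF W(1) x0W, of "\<lambda>x. of_int (T x) * (E * gam x0 r x)"] gy by simp
    have k: "of_int (T x0) * (sg * e0) = e0 * of_int \<bar>T x0\<bar>"
    proof -
      have "of_int (T x0) * (sg * e0) = e0 * (sg * of_int (T x0))" by (simp add: algebra_simps)
      then show ?thesis using sgT by simp
    qed
    have Tep: "of_int (T x0) * e p = (if dist x0 p \<ge> b then e0 * of_int \<bar>T x0\<bar> else 0)" for p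
      using k by (simp add: e_def)
    have Te: "of_int (T x0) * e p \<ge> 0" for p
      using e0 by (simp add: Tep)
    have "\<not> (dist x0 p1 < b \<and> dist x0 p2 < b)" using e12 dist_triangle[of p1 p2 x0] by (auto simp: dist_commute)
    then have "of_int (T x0) * e p1 > 0 \<or> of_int (T x0) * e p2 > 0"
      using e0 x0 by (auto simp: Tep)
    then have TE: "of_int (T x0) * E > 0" using Te[of p1] Te[of p2] Te[of p3] by (auto simp: E_def distrib_left)
    define c where "c = of_int (T x0) * (E * gam x0 r x0)"
    have cpos: "c > 0" using TE gam_pos[OF r0, of x0] by (simp add: c_def mult.assoc[symmetric])
    have "ereal (3 + c) \<le> median_obj 1 [pt p1, pt p2, pt p3] T"
      using GEN[where r=r and ua="e p1" and ub="e p2" and uc="e p3" and zz=x0, OF r0] ec[of p1] ec[of p2] ec[of p3] sumW gp W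
      by (simp add: E_def c_def)
    then show ?thesis using cpos by (intro exI[of _ c]) auto
  qed
qed

theorem mainTheorem2:
  fixes p1 p2 p3 :: "'a::euclidean_space"
  assumes "dist p1 p2 > 4" and "dist p1 p3 > 4" and "dist p2 p3 > 4"
  shows "integral0 (\<lambda>x::'a. 0::int) \<and>
    (\<forall>T. integral0 T \<longrightarrow>
       median_obj 1 [pt p1, pt p2, pt p3] (\<lambda>x. 0) \<le> median_obj 1 [pt p1, pt p2, pt p3] T) \<and>
    (\<forall>T. integral0 T \<and>
       median_obj 1 [pt p1, pt p2, pt p3] T = median_obj 1 [pt p1, pt p2, pt p3] (\<lambda>x. 0)
       \<longrightarrow> T = (\<lambda>x. 0))"
proof -
  have up: "median_obj 1 [pt p1, pt p2, pt p3] (\<lambda>x::'a. 0) \<le> 3"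
  proof -
    have "median_obj 1 [pt p1, pt p2, pt p3] (\<lambda>x::'a. 0) =
      flat 1 (cur0 (\<lambda>x. 0 - pt p1 x)) + (flat 1 (cur0 (\<lambda>x. 0 - pt p2 x)) + (flat 1 (cur0 (\<lambda>x. 0 - pt p3 x)) + 0))"
      by (simp add: median_obj_def)
    also have "\<dots> \<le> 1 + (1 + (1 + 0))" by (intro add_mono flat_upper order_refl)
    finally show ?thesis by simp
  qed
  have i0: "integral0 (\<lambda>x::'a. 0::int)" by (simp add: integral0_def)
  have ge: "median_obj 1 [pt p1, pt p2, pt p3] (\<lambda>x. 0) \<le> median_obj 1 [pt p1, pt p2, pt p3] T"
    if hT: "integral0 T" for T
  proof -
    obtain c where c: "c \<ge> 0" "ereal (3 + c) \<le> median_obj 1 [pt p1, pt p2, pt p3] T"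
      using obj_lower[OF assms hT] by blast
    have "median_obj 1 [pt p1, pt p2, pt p3] (\<lambda>x. 0) \<le> ereal 3" using up by simp
    also have "\<dots> \<le> ereal (3 + c)" using c by simp
    finally show ?thesis using c by simp
  qed
  have uq: "T = (\<lambda>x. 0)"
    if hT: "integral0 T" and hE: "median_obj 1 [pt p1, pt p2, pt p3] T = median_obj 1 [pt p1, pt p2, pt p3] (\<lambda>x. 0)" for T
  proof (rule ccontr)
    assume n: "T \<noteq> (\<lambda>x. 0)"
    obtain c where c: "c > 0" "ereal (3 + c) \<le> median_obj 1 [pt p1, pt p2, pt p3] T"
      using obj_lower[OF assms hT] n by blast
    have u3: "median_obj 1 [pt p1, pt p2, pt p3] (\<lambda>x. 0) \<le> ereal 3" using up by simp
    have "ereal (3 + c) \<le> ereal 3" using c(2) hE u3 by (metis order_trans)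
    then show False using c by simp
  qed
  show ?thesis using i0 ge uq by blast
qed

end
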